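(* Let $X, Y \subseteq \omega$. There exists an embedding $\mathcal{B}^X \hookrightarrow \mathcal{B}^Y$ if and only if $X \le_T Y$.
   Context: A pca is a set with a partial binary application operation containing distinct $\mathrm{s},\mathrm{k}$ with $\mathrm{k}ab\downarrow=a$, $\mathrm{s}ab\downarrow$, $\mathrm{s}abc\simeq(ac)(bc)$. An embedding of pcas is an injective map $f$ with: if $ab$ is defined then $f(a)f(b)$ is defined and equals $f(ab)$. $\mathcal{B}^Z$: elements are the partial $Z$-computable functions $\omega\rightharpoonup\omega$, with $\varphi\cdot\psi$ the partial function $n\mapsto\Phi^{\varphi\oplus\psi}_{\varphi(0)}(n)$, where $\Phi_e$ is the $e$-th Turing functional, $(\varphi\oplus\psi)(2n)\simeq\varphi(n)$, $(\varphi\oplus\psi)(2n+1)\simeq\psi(n)$, and querying the oracle at an undefined point diverges. *)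

theory Defs
  imports Main "HOL-Library.Countable"
begin

text \<open>Codes of partial recursive functions with an orcl call.  Arguments are lists of naturals.\<close>
datatype rf = Zero | Succ | Proj nat | Comp rf "rf list" | Prec rf rf | Mu rf | Orc

instance rf :: countable by countable_datatype

text \<open>Query arguments (type orcl) are partial functions; querying at an undefined point diverges.\<close>
type_synonym orcl = "nat \<Rightarrow> nat option"

inductive ev :: "orcl \<Rightarrow> rf \<Rightarrow> nat list \<Rightarrow> nat \<Rightarrow> bool" for Q :: orcl where
  ev_Zero: "ev Q Zero xs 0"
| ev_Succ: "ev Q Succ (x # xs) (Suc x)"
| ev_Proj: "i < length xs \<Longrightarrow> ev Q (Proj i) xs (xs ! i)"
| ev_Orc:  "Q x = Some y \<Longrightarrow> ev Q Orc (x # xs) y"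
| ev_Comp: "length ys = length gs \<Longrightarrow> (\<forall>i < length gs. ev Q (gs ! i) xs (ys ! i))
             \<Longrightarrow> ev Q f ys z \<Longrightarrow> ev Q (Comp f gs) xs z"
| ev_Prec0: "ev Q f xs y \<Longrightarrow> ev Q (Prec f g) (0 # xs) y"
| ev_PrecS: "ev Q (Prec f g) (n # xs) y \<Longrightarrow> ev Q g (n # y # xs) z
             \<Longrightarrow> ev Q (Prec f g) (Suc n # xs) z"
| ev_Mu: "ev Q f (n # xs) 0 \<Longrightarrow> (\<forall>m < n. \<exists>y. 0 < y \<and> ev Q f (m # xs) y)
             \<Longrightarrow> ev Q (Mu f) xs n"

definition Phi :: "nat \<Rightarrow> orcl \<Rightarrow> nat \<Rightarrow> nat option" where
  "Phi e Q n = (if \<exists>y. ev Q (from_nat e) [n] y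
                then Some (THE y. ev Q (from_nat e) [n] y) else None)"

definition set_orc :: "nat set \<Rightarrow> orcl" where
  "set_orc Z = (\<lambda>n. Some (if n \<in> Z then 1 else 0))"

definition Z_computable :: "nat set \<Rightarrow> (nat \<Rightarrow> nat option) \<Rightarrow> bool" where
  "Z_computable Z \<phi> \<longleftrightarrow> (\<exists>e. \<forall>n. \<phi> n = Phi e (set_orc Z) n)"

definition turing_le :: "nat set \<Rightarrow> nat set \<Rightarrow> bool" (infix "\<le>\<^sub>T" 50) where
  "X \<le>\<^sub>T Y \<longleftrightarrow> (\<exists>e. \<forall>n. Phi e (set_orc Y) n = Some (if n \<in> X then 1 else 0))"

definition ojoin :: "orcl \<Rightarrow> orcl \<Rightarrow> orcl" where
  "ojoin \<phi> \<psi> = (\<lambda>k. if even k then \<phi> (k div 2) else \<psi> (k div 2))"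

definition B_carrier :: "nat set \<Rightarrow> (nat \<Rightarrow> nat option) set" where
  "B_carrier Z = {\<phi>. Z_computable Z \<phi>}"

text \<open>Application: n maps to Phi_{phi(0)}^{phi join psi}(n); if phi(0) is undefined the
  result is the everywhere undefined function.  Application is thus always defined.\<close>
definition B_app :: "(nat \<Rightarrow> nat option) \<Rightarrow> (nat \<Rightarrow> nat option) \<Rightarrow> (nat \<Rightarrow> nat option) option" where
  "B_app \<phi> \<psi> = Some (\<lambda>n. case \<phi> 0 of None \<Rightarrow> None | Some e \<Rightarrow> Phi e (ojoin \<phi> \<psi>) n)"

definition pca_embedding ::
  "'a set \<Rightarrow> ('a \<Rightarrow> 'a \<Rightarrow> 'a option) \<Rightarrow> 'b set \<Rightarrow> ('b \<Rightarrow> 'b \<Rightarrow> 'b option) \<Rightarrow> ('a \<Rightarrow> 'b) \<Rightarrow> bool" where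
  "pca_embedding A appA B appB f \<longleftrightarrow>
     f ` A \<subseteq> B \<and> inj_on f A \<and>
     (\<forall>a\<in>A. \<forall>b\<in>A. \<forall>c. appA a b = Some c \<longrightarrow> appB (f a) (f b) = Some (f c))"

end

theory Submission
  imports Defs
begin

lemma ev_det: "ev Q c xs y \<Longrightarrow> ev Q c xs y' \<Longrightarrow> y = y'"
proof (induction arbitrary: y' rule: ev.induct)
  case (ev_Zero xs) from ev_Zero.prems show ?case by (cases rule: ev.cases) (use ev_Zero in auto)
next
  case (ev_Succ x xs) from ev_Succ.prems show ?case by (cases rule: ev.cases) (use ev_Succ in auto)
next
  case (ev_Proj i xs) from ev_Proj.prems show ?case by (cases rule: ev.cases) (use ev_Proj in auto)
next
  case (ev_Orc x y xs) from ev_Orc.prems show ?case by (cases rule: ev.cases) (use ev_Orc in auto)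
next
  case (ev_Comp ys gs xs f z)
  note H = ev_Comp.hyps ev_Comp.IH
  from ev_Comp.prems show ?case
  proof (cases rule: ev.cases)
    case (ev_Comp ys')
    have "ys' = ys"
    proof (rule nth_equalityI)
      show "length ys' = length ys" using ev_Comp H by simp
      fix i assume "i < length ys'"
      then show "ys' ! i = ys ! i" using ev_Comp H by (metis)
    qed
    then show ?thesis using ev_Comp H by auto
  qed
next
  case (ev_Prec0 f xs y g) from ev_Prec0.prems show ?case by (cases rule: ev.cases) (use ev_Prec0 in auto)
next
  case (ev_PrecS f g n xs y z)
  from ev_PrecS.prems show ?case by (cases rule: ev.cases) (use ev_PrecS.IH in fastforce)+
next
  case (ev_Mu f n xs)
  note H = ev_Mu.hyps ev_Mu.IH
  from ev_Mu.prems show ?case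
  proof (cases rule: ev.cases)
    case (ev_Mu)
    show ?thesis
    proof (rule ccontr)
      assume "n \<noteq> y'"
      then consider "n < y'" | "y' < n" by linarith
      then show False
      proof cases
        case 1 then obtain y where "0 < y" "ev Q f (n # xs) y" using ev_Mu by blast
        then show False using H by fastforce
      next
        case 2 then show False using ev_Mu H by fastforce
      qed
    qed
  qed
qed

lemma Phi_eqI: "ev Q (from_nat e) [n] y \<Longrightarrow> Phi e Q n = Some y"
  unfolding Phi_def using ev_det by (auto intro!: the_equality)

lemma Phi_None: "(\<And>y. \<not> ev Q (from_nat e) [n] y) \<Longrightarrow> Phi e Q n = None"
  unfolding Phi_def by auto

lemma Phi_SomeD: "Phi e Q n = Some y \<Longrightarrow> ev Q (from_nat e) [n] y"
  unfolding Phi_def by (auto split: if_splits intro: theI ev_det)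

lemma ev_CompI: "list_all2 (\<lambda>g y. ev Q g xs y) gs ys \<Longrightarrow> ev Q f ys z \<Longrightarrow> ev Q (Comp f gs) xs z"
  by (rule ev_Comp) (auto simp: list_all2_conv_all_nth)

lemma la2_Nil: "list_all2 P [] []" by simp
lemma la2_Cons: "P x y \<Longrightarrow> list_all2 P xs ys \<Longrightarrow> list_all2 P (x # xs) (y # ys)" by simp

lemma ev_Prec_rec:
  assumes "ev Q f xs b" and "\<And>k r. ev Q g (k # r # xs) (G k r)"
  shows "ev Q (Prec f g) (n # xs) (rec_nat b G n)"
  by (induction n) (auto intro: ev_Prec0 ev_PrecS assms)

lemma ev_P0: "ev Q (Proj 0) (x # xs) x" using ev_Proj[of 0 "x#xs"] by simp
lemma ev_P1: "ev Q (Proj 1) (x # y # xs) y" using ev_Proj[of 1 "x#y#xs"] by simp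
lemma ev_P2: "ev Q (Proj 2) (x # y # z # xs) z" using ev_Proj[of 2 "x#y#z#xs"] by simp
lemma ev_P3: "ev Q (Proj 3) (x # y # z # w # xs) w" using ev_Proj[of 3 "x#y#z#w#xs"] by simp

lemma ev_Proj': "i < length xs \<Longrightarrow> y = xs ! i \<Longrightarrow> ev Q (Proj i) xs y"
  by (simp add: ev_Proj)

lemma ev_eq: "ev Q c xs y \<Longrightarrow> y = y' \<Longrightarrow> ev Q c xs y'" by simp

lemma la2_evC: "ev Q g xs y \<Longrightarrow> list_all2 (\<lambda>g v. ev Q g xs v) gs ys \<Longrightarrow> list_all2 (\<lambda>g v. ev Q g xs v) (g # gs) (y # ys)" by simp

lemmas evI = ev_CompI la2_Cons la2_Nil ev_P0 ev_P1 ev_P2 ev_P3 ev_Zero ev_Succ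

primrec cnst :: "nat \<Rightarrow> rf" where
  "cnst 0 = Zero"
| "cnst (Suc c) = Comp Succ [cnst c]"
declare cnst.simps[simp del]

lemma ev_cnst: "ev Q (cnst c) xs c"
  by (induction c) (auto simp: cnst.simps intro!: ev_CompI ev_Zero intro: ev_Succ)

definition "PRED = Prec Zero (Proj 0)"
lemma ev_PRED: "ev Q PRED [a] (a - 1)"
proof -
  have "ev Q PRED [a] (rec_nat 0 (\<lambda>k r. k) a)"
    unfolding PRED_def by (rule ev_Prec_rec evI)+
  then show ?thesis by (cases a) auto
qed

definition "ADD = Prec (Proj 0) (Comp Succ [Proj 1])"
lemma ev_ADD: "ev Q ADD [a, b] (a + b)"
proof -
  have "ev Q ADD [a, b] (rec_nat b (\<lambda>k r. Suc r) a)"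
    unfolding ADD_def by (rule ev_Prec_rec evI)+
  moreover have "rec_nat b (\<lambda>k r. Suc r) a = a + b" by (induction a) auto
  ultimately show ?thesis by simp
qed

definition "MULT = Prec Zero (Comp ADD [Proj 1, Proj 2])"
lemma ev_MULT: "ev Q MULT [a, b] (a * b)"
proof -
  have "ev Q MULT [a, b] (rec_nat 0 (\<lambda>k r. r + b) a)"
    unfolding MULT_def by (rule ev_Prec_rec evI ev_ADD)+
  moreover have "rec_nat 0 (\<lambda>k r. r + b) a = a * b" by (induction a) auto
  ultimately show ?thesis by simp
qed

definition "IFZ = Prec (Proj 0) (Proj 3)"
lemma ev_IFZ: "ev Q IFZ [c, a, b] (if c = 0 then a else b)"
proof -
  have "ev Q IFZ [c, a, b] (rec_nat a (\<lambda>k r. b) c)"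
    unfolding IFZ_def by (rule ev_Prec_rec evI)+
  then show ?thesis by (cases c) auto
qed

definition "SG = Prec Zero (cnst 1)"
lemma ev_SG: "ev Q SG [a] (if a = 0 then 0 else 1)"
proof -
  have "ev Q SG [a] (rec_nat 0 (\<lambda>k r. 1) a)"
    unfolding SG_def by (rule ev_Prec_rec evI ev_cnst)+
  then show ?thesis by (cases a) auto
qed

definition "MONUS = Comp (Prec (Proj 0) (Comp PRED [Proj 1])) [Proj 1, Proj 0]"
lemma ev_MONUS: "ev Q MONUS [a, b] (a - b)"
proof -
  have "ev Q MONUS [a, b] (rec_nat a (\<lambda>k r. r - 1) b)"
    unfolding MONUS_def by (rule ev_Prec_rec evI ev_PRED)+
  moreover have "rec_nat a (\<lambda>k r. r - 1) b = a - b" by (induction b) auto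
  ultimately show ?thesis by simp
qed

definition "MOD = Prec Zero (Comp IFZ [Comp MONUS [Proj 2, Comp Succ [Proj 1]], Zero, Comp Succ [Proj 1]])"
lemma ev_MOD: "0 < d \<Longrightarrow> ev Q MOD [z, d] (z mod d)"
proof -
  assume d: "0 < d"
  have "ev Q MOD [z, d] (rec_nat 0 (\<lambda>k r. if d - Suc r = 0 then 0 else Suc r) z)"
    unfolding MOD_def by (rule ev_Prec_rec evI ev_IFZ ev_MONUS)+
  moreover have "rec_nat 0 (\<lambda>k r. if d - Suc r = 0 then 0 else Suc r) z = z mod d"
  proof (induction z)
    case 0 then show ?case by simp
  next
    case (Suc z)
    have "z mod d < d" using d by simp
    then show ?case using Suc by (simp add: mod_Suc)
  qed
  ultimately show ?thesis by simp
qed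

definition "DIV = Prec Zero (Comp IFZ [Comp MONUS [Proj 2, Comp Succ [Comp MOD [Proj 0, Proj 2]]], Comp Succ [Proj 1], Proj 1])"
lemma ev_DIV: "0 < d \<Longrightarrow> ev Q DIV [z, d] (z div d)"
proof -
  assume d: "0 < d"
  have "ev Q DIV [z, d] (rec_nat 0 (\<lambda>k r. if d - Suc (k mod d) = 0 then Suc r else r) z)"
    unfolding DIV_def by (rule ev_Prec_rec evI ev_IFZ ev_MONUS ev_MOD d)+
  moreover have "rec_nat 0 (\<lambda>k r. if d - Suc (k mod d) = 0 then Suc r else r) z = z div d"
  proof (induction z)
    case 0 then show ?case by simp
  next
    case (Suc z)
    have "z mod d < d" using d by simp
    then have "(d - Suc (z mod d) = 0) = (Suc z mod d = 0)" by (auto simp: mod_Suc)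
    then show ?case using Suc by (simp add: div_Suc)
  qed
  ultimately show ?thesis by simp
qed

definition "POW = Comp (Prec (cnst 1) (Comp MULT [Proj 1, Proj 2])) [Proj 1, Proj 0]"
lemma ev_POW: "ev Q POW [b, q] (b ^ q)"
proof -
  have "ev Q POW [b, q] (rec_nat 1 (\<lambda>k r. r * b) q)"
    unfolding POW_def by (rule ev_Prec_rec evI ev_MULT ev_cnst)+
  moreover have "rec_nat 1 (\<lambda>k r. r * b) q = b ^ q" by (induction q) auto
  ultimately show ?thesis by simp
qed

definition "EQ = Comp IFZ [Comp ADD [MONUS, Comp MONUS [Proj 1, Proj 0]], cnst 1, Zero]"
lemma ev_EQ: "ev Q EQ [a, b] (if a = b then 1 else 0)"
proof -
  have "ev Q EQ [a, b] (if (a - b) + (b - a) = 0 then 1 else 0)"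
    unfolding EQ_def by (rule evI ev_IFZ ev_MONUS ev_ADD ev_cnst)+
  moreover have "((a - b) + (b - a) = 0) = (a = b)" by arith
  ultimately show ?thesis by simp
qed

definition mstep :: "(nat \<Rightarrow> nat) \<Rightarrow> nat \<Rightarrow> nat \<Rightarrow> nat" where
  "mstep F t z = (if z = 0 then (if F t = 0 then 1 else if F t - 1 = 0 then t + 2 else 0) else z)"

definition mst :: "(nat \<Rightarrow> nat) \<Rightarrow> nat \<Rightarrow> nat" where
  "mst F n = rec_nat 0 (mstep F) n"

definition mfin :: "nat \<Rightarrow> nat" where
  "mfin z = (if z - 1 = 0 then 0 else z - 1)"

primrec bev :: "rf \<Rightarrow> (nat \<Rightarrow> nat) \<Rightarrow> nat \<Rightarrow> nat list \<Rightarrow> nat" where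
  "bev Zero h s xs = 1"
| "bev Succ h s xs = (case xs of [] \<Rightarrow> 0 | x # _ \<Rightarrow> Suc (Suc x))"
| "bev (Proj i) h s xs = (if i < length xs then Suc (xs ! i) else 0)"
| "bev (Comp f gs) h s xs = (let rs = map (\<lambda>g. bev g h s xs) gs in
      if 0 \<in> set rs then 0 else bev f h s (map (\<lambda>r. r - 1) rs))"
| "bev (Prec f g) h s xs = (case xs of [] \<Rightarrow> 0 | n # ys \<Rightarrow>
      rec_nat (bev f h s ys) (\<lambda>k r. if r = 0 then 0 else bev g h s (k # (r - 1) # ys)) n)"
| "bev (Mu f) h s xs = mfin (mst (\<lambda>t. bev f h s (t # xs)) (Suc s))"
| "bev Orc h s xs = (case xs of [] \<Rightarrow> 0 | x # _ \<Rightarrow> h x)"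

lemma mst_0[simp]: "mst F 0 = 0" by (simp add: mst_def)
lemma mst_Suc[simp]: "mst F (Suc t) = mstep F t (mst F t)" by (simp add: mst_def)

lemma mst_inv:
  "(mst F t = 0 \<longrightarrow> (\<forall>m<t. F m \<ge> 2)) \<and>
   (\<forall>y. mst F t = Suc (Suc y) \<longrightarrow> y < t \<and> F y = 1 \<and> (\<forall>m<y. F m \<ge> 2))"
proof (induction t)
  case 0 then show ?case by simp
next
  case (Suc t)
  show ?case
  proof (cases "mst F t = 0")
    case True
    then have lt: "\<forall>m<t. F m \<ge> 2" using Suc by blast
    show ?thesis using True lt
      by (auto simp: mstep_def less_Suc_eq split: if_splits)
  next
    case False
    then show ?thesis using Suc by (auto simp: mstep_def)
  qed
qed

lemma mst_found:
  assumes "\<forall>m<n. F m \<ge> 2" "F n = 1"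
  shows "mst F t = (if t \<le> n then 0 else n + 2)"
proof (induction t)
  case 0 then show ?case by simp
next
  case (Suc t)
  show ?case
  proof (cases "t < n")
    case True then show ?thesis using Suc assms by (auto simp: mstep_def)
  next
    case False
    then show ?thesis using Suc assms by (auto simp: mstep_def)
  qed
qed

definition "okh Q h \<longleftrightarrow> (\<forall>x v. h x = Suc v \<longrightarrow> Q x = Some v)"

lemma bev_sound: "okh Q h \<Longrightarrow> bev c h s xs = Suc y \<Longrightarrow> ev Q c xs y"
proof (induction c arbitrary: xs y)
  case Zero then show ?case by (auto intro: ev_Zero)
next
  case Succ then show ?case by (auto split: list.splits intro: ev_Succ)
next
  case (Proj i) then show ?case by (auto split: if_splits intro: ev_Proj)
next
  case Orc then show ?case by (auto simp: okh_def split: list.splits intro: ev_Orc)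
next
  case (Comp f gs)
  let ?rs = "map (\<lambda>g. bev g h s xs) gs"
  have nz: "0 \<notin> set ?rs" and fv: "bev f h s (map (\<lambda>r. r - 1) ?rs) = Suc y"
    using Comp.prems by (auto simp: Let_def split: if_splits)
  show ?case
  proof (rule ev_Comp)
    show "length (map (\<lambda>r. r - 1) ?rs) = length gs" by simp
    show "\<forall>i<length gs. ev Q (gs ! i) xs (map (\<lambda>r. r - 1) ?rs ! i)"
    proof (intro allI impI)
      fix i assume i: "i < length gs"
      then have "bev (gs ! i) h s xs \<in> set ?rs" by simp
      then have "bev (gs ! i) h s xs \<noteq> 0" using nz by metis
      then have "bev (gs ! i) h s xs = Suc (map (\<lambda>r. r - 1) ?rs ! i)" using i by simp
      then show "ev Q (gs ! i) xs (map (\<lambda>r. r - 1) ?rs ! i)"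
        using Comp.IH(2)[OF nth_mem[OF i] Comp.prems(1)] by auto
    qed
    show "ev Q f (map (\<lambda>r. r - 1) ?rs) y" using Comp.IH(1) Comp.prems(1) fv by blast
  qed
next
  case (Prec f g)
  then obtain n ys where xs: "xs = n # ys" by (auto split: list.splits)
  have "\<forall>y. rec_nat (bev f h s ys) (\<lambda>k r. if r = 0 then 0 else bev g h s (k # (r - 1) # ys)) n = Suc y
        \<longrightarrow> ev Q (Prec f g) (n # ys) y"
  proof (induction n)
    case 0 then show ?case using Prec.IH(1) Prec.prems(1) by (auto intro: ev_Prec0)
  next
    case (Suc n)
    show ?case
    proof (intro allI impI)
      fix y
      assume a: "rec_nat (bev f h s ys) (\<lambda>k r. if r = 0 then 0 else bev g h s (k # (r - 1) # ys)) (Suc n) = Suc y"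
      let ?r = "rec_nat (bev f h s ys) (\<lambda>k r. if r = 0 then 0 else bev g h s (k # (r - 1) # ys)) n"
      have r0: "?r \<noteq> 0" using a by (auto split: if_splits)
      then obtain y' where y': "?r = Suc y'" by (cases ?r) auto
      have "bev g h s (n # y' # ys) = Suc y" using a y' by simp
      then have "ev Q g (n # y' # ys) y" using Prec.IH(2) Prec.prems(1) by blast
      moreover have "ev Q (Prec f g) (n # ys) y'" using Suc y' by blast
      ultimately show "ev Q (Prec f g) (Suc n # ys) y" by (blast intro: ev_PrecS)
    qed
  qed
  then show ?case using Prec.prems(2) xs by simp
next
  case (Mu f)
  let ?F = "\<lambda>t. bev f h s (t # xs)"
  have "mst ?F (Suc s) = Suc (Suc y)" using Mu.prems(2)
    by (auto simp: mfin_def split: if_splits)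
  then have "?F y = 1" "\<forall>m<y. ?F m \<ge> 2" using mst_inv[of ?F "Suc s"] by auto
  show ?case
  proof (rule ev_Mu)
    show "ev Q f (y # xs) 0" using Mu.IH Mu.prems(1) \<open>?F y = 1\<close> by (simp add: One_nat_def)
    show "\<forall>m<y. \<exists>v>0. ev Q f (m # xs) v"
    proof (intro allI impI)
      fix m assume "m < y"
      then have "?F m \<ge> 2" using \<open>\<forall>m<y. ?F m \<ge> 2\<close> by blast
      then obtain v where "?F m = Suc v" "v > 0" by (cases "?F m") auto
      then show "\<exists>v>0. ev Q f (m # xs) v" using Mu.IH Mu.prems(1) by blast
    qed
  qed
qed

definition "gd Q F h \<longleftrightarrow> (\<forall>x\<in>F. h x = Suc (the (Q x)))"

definition "cpl Q c xs y \<longleftrightarrow> (\<exists>s0 F. finite F \<and> (\<forall>x\<in>F. Q x \<noteq> None) \<and>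
    (\<forall>s\<ge>s0. \<forall>h. gd Q F h \<longrightarrow> bev c h s xs = Suc y))"

lemma gd_mono: "gd Q F h \<Longrightarrow> G \<subseteq> F \<Longrightarrow> gd Q G h" by (auto simp: gd_def)

lemma cpl_family:
  assumes "\<forall>i<(k::nat). cpl Q (c i) (xs i) (y i)"
  shows "\<exists>s0 F. finite F \<and> (\<forall>x\<in>F. Q x \<noteq> None) \<and>
    (\<forall>s\<ge>s0. \<forall>h. gd Q F h \<longrightarrow> (\<forall>i<k. bev (c i) h s (xs i) = Suc (y i)))"
  using assms
proof (induction k)
  case 0 then show ?case by auto
next
  case (Suc k)
  then obtain s0 F where A: "finite F" "\<forall>x\<in>F. Q x \<noteq> None"
     "\<forall>s\<ge>s0. \<forall>h. gd Q F h \<longrightarrow> (\<forall>i<k. bev (c i) h s (xs i) = Suc (y i))" by auto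
  from Suc.prems obtain s1 F1 where B: "finite F1" "\<forall>x\<in>F1. Q x \<noteq> None"
     "\<forall>s\<ge>s1. \<forall>h. gd Q F1 h \<longrightarrow> bev (c k) h s (xs k) = Suc (y k)"
    unfolding cpl_def by auto
  show ?case
  proof (intro exI conjI allI impI)
    show "finite (F \<union> F1)" using A B by simp
    show "\<forall>x\<in>F \<union> F1. Q x \<noteq> None" using A B by blast
    fix s h i assume s: "s0 + s1 \<le> s" and g: "gd Q (F \<union> F1) h" and i: "i < Suc k"
    have g1: "gd Q F h" "gd Q F1 h" using g gd_mono by blast+
    show "bev (c i) h s (xs i) = Suc (y i)"
    proof (cases "i < k")
      case True then show ?thesis using A(3) g1 s by auto
    next
      case False then have "i = k" using i by simp
      then show ?thesis using B(3) g1 s by auto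
    qed
  qed
qed

lemma cpl_one: "cpl Q c xs y \<Longrightarrow> \<exists>s0 F. finite F \<and> (\<forall>x\<in>F. Q x \<noteq> None) \<and>
    (\<forall>s\<ge>s0. \<forall>h. gd Q F h \<longrightarrow> bev c h s xs = Suc y)"
  by (simp add: cpl_def)

lemma cplI: "(\<And>s h. s \<ge> s0 \<Longrightarrow> gd Q F h \<Longrightarrow> bev c h s xs = Suc y) \<Longrightarrow> finite F \<Longrightarrow>
   (\<forall>x\<in>F. Q x \<noteq> None) \<Longrightarrow> cpl Q c xs y"
  unfolding cpl_def by blast

lemma bev_complete: "ev Q c xs y \<Longrightarrow> cpl Q c xs y"
proof (induction rule: ev.induct)
  case (ev_Zero xs) then show ?case by (intro cplI[of 0 Q "{}"]) auto
next
  case (ev_Succ x xs) then show ?case by (intro cplI[of 0 Q "{}"]) auto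
next
  case (ev_Proj i xs) then show ?case by (intro cplI[of 0 Q "{}"]) auto
next
  case (ev_Orc x y xs) then show ?case by (intro cplI[of 0 Q "{x}"]) (auto simp: gd_def)
next
  case (ev_Comp ys gs xs f z)
  have "\<forall>i<length gs. cpl Q (gs ! i) xs (ys ! i)" using ev_Comp.IH by blast
  from cpl_family[OF this] obtain s0 F where A: "finite F" "\<forall>x\<in>F. Q x \<noteq> None"
     "\<forall>s\<ge>s0. \<forall>h. gd Q F h \<longrightarrow> (\<forall>i<length gs. bev (gs ! i) h s xs = Suc (ys ! i))" by blast
  from ev_Comp.IH(2) obtain s1 F1 where B: "finite F1" "\<forall>x\<in>F1. Q x \<noteq> None"
     "\<forall>s\<ge>s1. \<forall>h. gd Q F1 h \<longrightarrow> bev f h s ys = Suc z" unfolding cpl_def by blast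
  show ?case
  proof (rule cplI[of "s0 + s1" Q "F \<union> F1"])
    fix s h assume s: "s0 + s1 \<le> s" and g: "gd Q (F \<union> F1) h"
    have g1: "gd Q F h" "gd Q F1 h" using g gd_mono by blast+
    have rs: "map (\<lambda>g. bev g h s xs) gs = map Suc ys"
      by (rule nth_equalityI) (use A(3) g1 s ev_Comp.hyps(1) in auto)
    show "bev (Comp f gs) h s xs = Suc z" using rs B(3) g1 s by (simp add: comp_def)
  qed (use A B in auto)
next
  case (ev_Prec0 f xs y g)
  then obtain s0 F where B: "finite F" "\<forall>x\<in>F. Q x \<noteq> None"
     "\<forall>s\<ge>s0. \<forall>h. gd Q F h \<longrightarrow> bev f h s xs = Suc y" unfolding cpl_def by blast
  show ?case by (rule cplI[of s0 Q F]) (use B in auto)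
next
  case (ev_PrecS f g n xs y z)
  from ev_PrecS.IH(1) obtain s0 F where A: "finite F" "\<forall>x\<in>F. Q x \<noteq> None"
     "\<forall>s\<ge>s0. \<forall>h. gd Q F h \<longrightarrow> bev (Prec f g) h s (n # xs) = Suc y" unfolding cpl_def by blast
  from ev_PrecS.IH(2) obtain s1 F1 where B: "finite F1" "\<forall>x\<in>F1. Q x \<noteq> None"
     "\<forall>s\<ge>s1. \<forall>h. gd Q F1 h \<longrightarrow> bev g h s (n # y # xs) = Suc z" unfolding cpl_def by blast
  show ?case
  proof (rule cplI[of "s0 + s1" Q "F \<union> F1"])
    fix s h assume s: "s0 + s1 \<le> s" and g: "gd Q (F \<union> F1) h"
    have g1: "gd Q F h" "gd Q F1 h" using g gd_mono by blast+
    have "bev (Prec f g) h s (n # xs) = Suc y" using A(3) g1 s by auto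
    moreover have "bev g h s (n # y # xs) = Suc z" using B(3) g1 s by auto
    ultimately show "bev (Prec f g) h s (Suc n # xs) = Suc z" by simp
  qed (use A B in auto)
next
  case (ev_Mu f n xs)
  have "\<forall>m. \<exists>v. m < n \<longrightarrow> (0 < v \<and> cpl Q f (m # xs) v)" using ev_Mu.IH(2) by blast
  then obtain Y where Y: "\<forall>m<n. 0 < Y m \<and> cpl Q f (m # xs) (Y m)" by metis
  have "\<forall>m<n. cpl Q f (m # xs) (Y m)" using Y by blast
  from cpl_family[OF this] obtain s0 F where A: "finite F" "\<forall>x\<in>F. Q x \<noteq> None"
     "\<forall>s\<ge>s0. \<forall>h. gd Q F h \<longrightarrow> (\<forall>m<n. bev f h s (m # xs) = Suc (Y m))" by blast
  from ev_Mu.IH(1) obtain s1 F1 where B: "finite F1" "\<forall>x\<in>F1. Q x \<noteq> None"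
     "\<forall>s\<ge>s1. \<forall>h. gd Q F1 h \<longrightarrow> bev f h s (n # xs) = Suc 0" unfolding cpl_def by blast
  show ?case
  proof (rule cplI[of "s0 + s1 + n" Q "F \<union> F1"])
    fix s h assume s: "s0 + s1 + n \<le> s" and g: "gd Q (F \<union> F1) h"
    have g1: "gd Q F h" "gd Q F1 h" using g gd_mono by blast+
    let ?F = "\<lambda>t. bev f h s (t # xs)"
    have "\<forall>m<n. ?F m \<ge> 2" using A(3) g1 s Y by fastforce
    moreover have "?F n = 1" using B(3) g1 s by auto
    ultimately have "mst ?F (Suc s) = n + 2" using mst_found[of n ?F "Suc s"] s by auto
    then show "bev (Mu f) h s xs = Suc n" by (simp add: mfin_def)
  qed (use A B in auto)
qed

definition prms :: "nat \<Rightarrow> nat \<Rightarrow> rf list" where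
  "prms m P = map (\<lambda>j. Proj (m + j)) [0..<P]"

lemma la2_prms: "length xs = m \<Longrightarrow> length ps = P \<Longrightarrow>
   list_all2 (\<lambda>g v. ev Q g (xs @ ps) v) (prms m P) ps"
  unfolding prms_def list_all2_conv_all_nth
  by (auto intro!: ev_Proj' simp: nth_append)

lemma la2_sh2: "length zs = L \<Longrightarrow>
   list_all2 (\<lambda>g v. ev Q g (x # y # zs) v) (map (\<lambda>j. Proj (2 + j)) [0..<L]) zs"
  unfolding list_all2_conv_all_nth by (auto intro!: ev_Proj')

lemma la2_sh0: "length zs = L \<Longrightarrow>
   list_all2 (\<lambda>g v. ev Q g zs v) (map Proj [0..<L]) zs"
  unfolding list_all2_conv_all_nth by (auto intro!: ev_Proj')

lemma la2_map_map: "(\<And>x. x \<in> set xs \<Longrightarrow> P (f x) (g x)) \<Longrightarrow> list_all2 P (map f xs) (map g xs)"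
  by (induction xs) auto

primrec andnz :: "rf list \<Rightarrow> rf" where
  "andnz [] = cnst 1"
| "andnz (c # cs) = Comp MULT [Comp SG [c], andnz cs]"

lemma ev_andnz: "list_all2 (\<lambda>g v. ev Q g args v) cs rs \<Longrightarrow>
   ev Q (andnz cs) args (if 0 \<in> set rs then 0 else 1)"
proof (induction cs arbitrary: rs)
  case Nil then show ?case by (simp add: ev_cnst)
next
  case (Cons c cs)
  then obtain r rs' where rs: "rs = r # rs'" "ev Q c args r" "list_all2 (\<lambda>g v. ev Q g args v) cs rs'"
    by (cases rs) auto
  have "ev Q (andnz (c # cs)) args ((if r = 0 then 0 else 1) * (if 0 \<in> set rs' then 0 else 1))"
    unfolding andnz.simps by (rule evI ev_MULT ev_SG rs Cons.IH)+
  then show ?case by (rule ev_eq) (use rs in simp)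
qed

definition "MFIN = Comp IFZ [PRED, Zero, PRED]"
lemma ev_MFIN: "ev Q MFIN [z] (mfin z)"
proof -
  have "ev Q MFIN [z] (if z - 1 = 0 then 0 else z - 1)"
    unfolding MFIN_def by (rule evI ev_IFZ ev_PRED)+
  then show ?thesis by (simp add: mfin_def)
qed

definition MSTEP :: "rf \<Rightarrow> nat \<Rightarrow> rf" where
  "MSTEP cf L = (let R = Comp cf (Proj 0 # map (\<lambda>j. Proj (2 + j)) [0..<L]) in
     Comp IFZ [Proj 1, Comp IFZ [R, cnst 1, Comp IFZ [Comp PRED [R], Comp Succ [Comp Succ [Proj 0]], Zero]], Proj 1])"

lemma ev_MSTEP:
  assumes "length rest = L" "ev Q cf (t # rest) R"
  shows "ev Q (MSTEP cf L) (t # z # rest) (if z = 0 then (if R = 0 then 1 else if R - 1 = 0 then Suc (Suc t) else 0) else z)"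
proof -
  have r: "ev Q (Comp cf (Proj 0 # map (\<lambda>j. Proj (2 + j)) [0..<L])) (t # z # rest) R"
    by (rule ev_CompI[OF la2_evC[OF ev_P0 la2_sh2[OF assms(1)]] assms(2)])
  show ?thesis unfolding MSTEP_def Let_def
    by (rule evI ev_IFZ ev_PRED ev_cnst r)+
qed

primrec cmp :: "rf \<Rightarrow> rf \<Rightarrow> nat \<Rightarrow> nat \<Rightarrow> rf" where
  "cmp Zero oc P m = cnst 1"
| "cmp Succ oc P m = (if m = 0 then Zero else Comp Succ [Comp Succ [Proj 0]])"
| "cmp (Proj i) oc P m = (if i < m then Comp Succ [Proj i] else Zero)"
| "cmp Orc oc P m = (if m = 0 then Zero else Comp oc (Proj 0 # prms m P))"
| "cmp (Comp f gs) oc P m = Comp MULT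
     [Comp (cmp f oc P (length gs)) (map (\<lambda>g. Comp PRED [cmp g oc P m]) gs @ prms m P),
      andnz (map (\<lambda>g. cmp g oc P m) gs)]"
| "cmp (Prec f g) oc P m = (case m of 0 \<Rightarrow> Zero | Suc m' \<Rightarrow>
     Prec (cmp f oc P m')
       (Comp MULT [Comp SG [Proj 1], Comp (cmp g oc P (Suc (Suc m')))
          (Proj 0 # Comp PRED [Proj 1] # map (\<lambda>j. Proj (2 + j)) [0..<m' + P])]))"
| "cmp (Mu f) oc P m = Comp MFIN [Comp (Prec Zero (MSTEP (cmp f oc P (Suc m)) (m + P)))
     (Comp Succ [Proj m] # map Proj [0..<m + P])]"

lemma cmp_correct:
  assumes ps: "length ps = P" "0 < P" and oc: "\<And>x. ev Q oc (x # ps) (hf x)"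
  shows "length xs = m \<Longrightarrow> ev Q (cmp c oc P m) (xs @ ps) (bev c hf (ps ! 0) xs)"
proof (induction c arbitrary: m xs)
  case Zero then show ?case by (simp add: ev_cnst)
next
  case Succ
  show ?case
  proof (cases xs)
    case Nil then show ?thesis using Succ by (simp add: ev_Zero)
  next
    case (Cons x xs')
    then show ?thesis using Succ by simp (rule evI)+
  qed
next
  case (Proj i)
  show ?case
  proof (cases "i < m")
    case True
    have "ev Q (Proj i) (xs @ ps) (xs ! i)" by (rule ev_Proj') (use True Proj in \<open>auto simp: nth_append\<close>)
    then have "ev Q (Comp Succ [Proj i]) (xs @ ps) (Suc (xs ! i))"
      by (rule ev_CompI[OF la2_evC[OF _ la2_Nil] ev_Succ])
    then show ?thesis using True Proj by simp
  next
    case False then show ?thesis using Proj by (simp add: ev_Zero)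
  qed
next
  case Orc
  show ?case
  proof (cases xs)
    case Nil then show ?thesis using Orc by (simp add: ev_Zero)
  next
    case (Cons x xs')
    have "ev Q (Comp oc (Proj 0 # prms m P)) ((x # xs') @ ps) (hf x)"
      by (rule ev_CompI[OF la2_evC[OF _ la2_prms]]) (use Cons Orc ps oc in \<open>auto intro: ev_P0\<close>)
    then show ?thesis using Cons Orc by simp
  qed
next
  case (Comp f gs)
  let ?s = "ps ! 0"
  let ?rs = "map (\<lambda>g. bev g hf ?s xs) gs"
  have A: "list_all2 (\<lambda>g v. ev Q g (xs @ ps) v) (map (\<lambda>g. cmp g oc P m) gs) ?rs"
    by (rule la2_map_map) (use Comp in auto)
  have B: "list_all2 (\<lambda>g v. ev Q g (xs @ ps) v) (map (\<lambda>g. Comp PRED [cmp g oc P m]) gs) (map (\<lambda>r. r - 1) ?rs)"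
    unfolding map_map o_def
    by (rule la2_map_map, rule ev_CompI[OF la2_evC[OF _ la2_Nil] ev_PRED]) (use Comp in auto)
  have C: "ev Q (cmp f oc P (length gs)) (map (\<lambda>r. r - 1) ?rs @ ps) (bev f hf ?s (map (\<lambda>r. r - 1) ?rs))"
    using Comp.IH(1)[of "map (\<lambda>r. r - 1) ?rs" "length gs"] by simp
  have D: "ev Q (Comp (cmp f oc P (length gs)) (map (\<lambda>g. Comp PRED [cmp g oc P m]) gs @ prms m P)) (xs @ ps)
      (bev f hf ?s (map (\<lambda>r. r - 1) ?rs))"
    by (rule ev_CompI[OF list_all2_appendI[OF B la2_prms] C]) (use Comp ps in auto)
  have "ev Q (cmp (Comp f gs) oc P m) (xs @ ps)
       (bev f hf ?s (map (\<lambda>r. r - 1) ?rs) * (if 0 \<in> set ?rs then 0 else 1))"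
    unfolding cmp.simps by (rule evI ev_MULT D ev_andnz A)+
  then show ?case by (rule ev_eq) (simp add: Let_def)
next
  case (Prec f g)
  let ?s = "ps ! 0"
  show ?case
  proof (cases m)
    case 0 then show ?thesis using Prec by (simp add: ev_Zero)
  next
    case (Suc m')
    then obtain n ys where xs: "xs = n # ys" "length ys = m'" using Prec.prems by (cases xs) auto
    have Fb: "ev Q (cmp f oc P m') (ys @ ps) (bev f hf ?s ys)" using Prec.IH(1) xs by blast
    have Gs: "ev Q (Comp MULT [Comp SG [Proj 1], Comp (cmp g oc P (Suc (Suc m')))
          (Proj 0 # Comp PRED [Proj 1] # map (\<lambda>j. Proj (2 + j)) [0..<m' + P])]) (k # r # ys @ ps)
          ((if r = 0 then 0 else 1) * bev g hf ?s (k # (r - 1) # ys))" for k r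
    proof -
      have g: "ev Q (cmp g oc P (Suc (Suc m'))) (k # (r - 1) # ys @ ps) (bev g hf ?s (k # (r - 1) # ys))"
        using Prec.IH(2)[of "k # (r - 1) # ys"] xs by simp
      have "list_all2 (\<lambda>g v. ev Q g (k # r # ys @ ps) v)
          (Proj 0 # Comp PRED [Proj 1] # map (\<lambda>j. Proj (2 + j)) [0..<m' + P]) (k # (r - 1) # ys @ ps)"
        by (rule la2_Cons ev_P0 ev_CompI ev_P1 la2_Nil ev_PRED la2_sh2)+ (use xs ps in simp)
      then have a: "ev Q (Comp (cmp g oc P (Suc (Suc m')))
          (Proj 0 # Comp PRED [Proj 1] # map (\<lambda>j. Proj (2 + j)) [0..<m' + P])) (k # r # ys @ ps)
          (bev g hf ?s (k # (r - 1) # ys))" by (rule ev_CompI[OF _ g])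
      have sg: "ev Q (Comp SG [Proj 1]) (k # r # ys @ ps) (if r = 0 then 0 else 1)"
        by (rule ev_CompI[OF la2_evC[OF ev_P1 la2_Nil] ev_SG])
      show ?thesis by (rule ev_CompI[OF la2_evC[OF sg la2_evC[OF a la2_Nil]] ev_MULT])
    qed
    have "ev Q (cmp (Prec f g) oc P m) (n # ys @ ps)
       (rec_nat (bev f hf ?s ys) (\<lambda>k r. (if r = 0 then 0 else 1) * bev g hf ?s (k # (r - 1) # ys)) n)"
      unfolding Suc cmp.simps nat.case by (rule ev_Prec_rec[OF Fb Gs])
    moreover have "(\<lambda>k r. (if r = 0 then 0 else 1) * bev g hf ?s (k # (r - 1) # ys)) =
        (\<lambda>k r. if r = 0 then 0 else bev g hf ?s (k # (r - 1) # ys))" by (intro ext) simp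
    ultimately show ?thesis using xs by simp
  qed
next
  case (Mu f)
  let ?s = "ps ! 0"
  let ?F = "\<lambda>t. bev f hf ?s (t # xs)"
  have St: "ev Q (MSTEP (cmp f oc P (Suc m)) (m + P)) (t # z # xs @ ps) (mstep ?F t z)" for t z
  proof -
    have "ev Q (cmp f oc P (Suc m)) ((t # xs) @ ps) (?F t)" using Mu.IH[of "t # xs"] Mu.prems by simp
    then have "ev Q (MSTEP (cmp f oc P (Suc m)) (m + P)) (t # z # xs @ ps)
      (if z = 0 then (if ?F t = 0 then 1 else if ?F t - 1 = 0 then Suc (Suc t) else 0) else z)"
      by (intro ev_MSTEP) (use Mu.prems ps in auto)
    then show ?thesis by (rule ev_eq) (simp add: mstep_def)
  qed
  have P0: "ev Q (Prec Zero (MSTEP (cmp f oc P (Suc m)) (m + P))) (Suc ?s # xs @ ps) (rec_nat 0 (mstep ?F) (Suc ?s))"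
    by (rule ev_Prec_rec[OF ev_Zero St])
  have args: "list_all2 (\<lambda>g v. ev Q g (xs @ ps) v) (Comp Succ [Proj m] # map Proj [0..<m + P]) (Suc ?s # xs @ ps)"
  proof (rule la2_Cons)
    have "ev Q (Proj m) (xs @ ps) ?s" by (rule ev_Proj') (use Mu.prems ps in \<open>auto simp: nth_append\<close>)
    then show "ev Q (Comp Succ [Proj m]) (xs @ ps) (Suc ?s)"
      by (rule ev_CompI[OF la2_evC[OF _ la2_Nil] ev_Succ])
    show "list_all2 (\<lambda>g v. ev Q g (xs @ ps) v) (map Proj [0..<m + P]) (xs @ ps)"
      by (rule la2_sh0) (use Mu.prems ps in simp)
  qed
  have "ev Q (cmp (Mu f) oc P m) (xs @ ps) (mfin (rec_nat 0 (mstep ?F) (Suc ?s)))"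
    unfolding cmp.simps by (rule ev_CompI[OF la2_evC[OF ev_CompI[OF args P0] la2_Nil] ev_MFIN])
  then show ?case by (simp add: mst_def)
qed

definition tsum :: "nat \<Rightarrow> (nat \<Rightarrow> nat) \<Rightarrow> nat \<Rightarrow> nat" where
  "tsum B D L = rec_nat 0 (\<lambda>t acc. acc + D t * B ^ t) L"

lemma tsum_digits:
  assumes B: "1 < B" and D: "\<forall>x<L. D x < B"
  shows "tsum B D L < B ^ L \<and> (\<forall>q<L. tsum B D L div B ^ q mod B = D q)"
  using D
proof (induction L)
  case 0 then show ?case by (simp add: tsum_def)
next
  case (Suc L)
  have IH: "tsum B D L < B ^ L" "\<forall>q<L. tsum B D L div B ^ q mod B = D q" using Suc by auto
  have eq: "tsum B D (Suc L) = tsum B D L + D L * B ^ L" by (simp add: tsum_def)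
  have DL: "D L < B" using Suc.prems by simp
  have bnd: "tsum B D (Suc L) < B ^ Suc L"
  proof -
    have "D L * B ^ L \<le> (B - 1) * B ^ L" using DL by (intro mult_le_mono1) simp
    then have "tsum B D L + D L * B ^ L < B ^ L + (B - 1) * B ^ L" using IH(1) by linarith
    also have "\<dots> = B ^ Suc L" using B by (simp add: algebra_simps)
    finally show ?thesis using eq by simp
  qed
  have dig: "tsum B D (Suc L) div B ^ q mod B = D q" if q: "q < Suc L" for q
  proof (cases "q < L")
    case True
    have Bq: "B ^ q > 0" using B by simp
    obtain d where d: "L = Suc (q + d)" using True less_imp_Suc_add by blast
    have "D L * B ^ L = (D L * B ^ d * B) * B ^ q" using d by (simp add: power_add mult_ac)
    then have "tsum B D (Suc L) = tsum B D L + (D L * B ^ d * B) * B ^ q"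
      using eq by simp
    then have "tsum B D (Suc L) div B ^ q = tsum B D L div B ^ q + (D L * B ^ d) * B"
      using Bq by simp
    then have "tsum B D (Suc L) div B ^ q mod B = tsum B D L div B ^ q mod B"
      by simp
    then show ?thesis using IH(2) True by simp
  next
    case False
    then have qL: "q = L" using q by simp
    have "tsum B D (Suc L) div B ^ L = D L + tsum B D L div B ^ L"
      using eq B by simp
    also have "tsum B D L div B ^ L = 0" using IH(1) by simp
    finally show ?thesis using qL DL by simp
  qed
  show ?case using bnd dig by blast
qed

definition cap :: "nat \<Rightarrow> nat \<Rightarrow> nat" where
  "cap s r = (if r - Suc s = 0 then r else 0)"

definition tabsum :: "nat \<Rightarrow> (nat \<Rightarrow> nat) \<Rightarrow> nat" where
  "tabsum s D = tsum (Suc (Suc s)) D s"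

definition lookup :: "nat \<Rightarrow> nat \<Rightarrow> nat \<Rightarrow> nat" where
  "lookup T q s = (if Suc q - s = 0 then T div (Suc (Suc s)) ^ q mod (Suc (Suc s)) else 0)"

lemma lookup_tabsum: "lookup (tabsum s (\<lambda>x. cap s (D x))) q s = (if q < s then cap s (D q) else 0)"
proof -
  have "\<forall>x<s. cap s (D x) < Suc (Suc s)" by (auto simp: cap_def)
  from tsum_digits[OF _ this] show ?thesis
    by (auto simp: lookup_def tabsum_def)
qed

definition OY :: "nat set \<Rightarrow> nat \<Rightarrow> nat" where
  "OY Y x = Suc (if x \<in> Y then 1 else 0)"

lemma okh_OY: "okh (set_orc Y) (OY Y)"
  by (auto simp: okh_def OY_def set_orc_def)

lemma gd_OY: "gd (set_orc Y) F (OY Y)"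
  by (auto simp: gd_def OY_def set_orc_def)

lemma phiY_sound: "bev (from_nat e) (OY Y) s [q] = Suc v \<Longrightarrow> Phi e (set_orc Y) q = Some v"
  by (rule Phi_eqI, rule bev_sound[OF okh_OY])

lemma phiY_complete: "Phi e (set_orc Y) q = Some v \<Longrightarrow>
   eventually (\<lambda>s. bev (from_nat e) (OY Y) s [q] = Suc v) sequentially"
proof -
  assume "Phi e (set_orc Y) q = Some v"
  then have "cpl (set_orc Y) (from_nat e) [q] v" by (intro bev_complete Phi_SomeD)
  then obtain s0 F where "\<forall>s\<ge>s0. \<forall>h. gd (set_orc Y) F h \<longrightarrow> bev (from_nat e) h s [q] = Suc v"
    unfolding cpl_def by blast
  then show ?thesis unfolding eventually_sequentially using gd_OY by blast
qed

definition jn :: "(nat \<Rightarrow> nat \<Rightarrow> nat) \<Rightarrow> (nat \<Rightarrow> nat \<Rightarrow> nat) \<Rightarrow> nat \<Rightarrow> nat \<Rightarrow> nat" where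
  "jn G H s q = (if q mod 2 = 0 then G s (q div 2) else H s (q div 2))"

lemma join_sound:
  assumes "\<forall>s q v. G s q = Suc v \<longrightarrow> g q = Some v" "\<forall>s q v. H s q = Suc v \<longrightarrow> hh q = Some v"
  shows "okh (ojoin g hh) (jn G H s)"
  using assms by (auto simp: okh_def jn_def ojoin_def even_iff_mod_2_eq_zero split: if_splits)

lemma join_complete:
  assumes G: "\<forall>q v. g q = Some v \<longrightarrow> eventually (\<lambda>s. G s q = Suc v) sequentially"
    and H: "\<forall>q v. hh q = Some v \<longrightarrow> eventually (\<lambda>s. H s q = Suc v) sequentially"
    and ev: "ev (ojoin g hh) c xs y"
  shows "eventually (\<lambda>s. bev c (jn G H s) s xs = Suc y) sequentially"
proof -
  from bev_complete[OF ev] obtain s0 F where F: "finite F" "\<forall>x\<in>F. ojoin g hh x \<noteq> None"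
     and B: "\<forall>s\<ge>s0. \<forall>h. gd (ojoin g hh) F h \<longrightarrow> bev c h s xs = Suc y"
    unfolding cpl_def by blast
  have "\<forall>x\<in>F. eventually (\<lambda>s. jn G H s x = Suc (the (ojoin g hh x))) sequentially"
  proof
    fix x assume "x \<in> F"
    then obtain w where w: "ojoin g hh x = Some w" using F by blast
    show "eventually (\<lambda>s. jn G H s x = Suc (the (ojoin g hh x))) sequentially"
    proof (cases "x mod 2 = 0")
      case True
      then have "g (x div 2) = Some w" using w by (simp add: ojoin_def even_iff_mod_2_eq_zero)
      then show ?thesis using G True w by (simp add: jn_def)
    next
      case False
      then have "hh (x div 2) = Some w" using w by (simp add: ojoin_def even_iff_mod_2_eq_zero)
      then show ?thesis using H False w by (simp add: jn_def)
    qed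
  qed
  then have "eventually (\<lambda>s. \<forall>x\<in>F. jn G H s x = Suc (the (ojoin g hh x))) sequentially"
    by (rule eventually_ball_finite[OF F(1)])
  moreover have "eventually (\<lambda>s. s \<ge> s0) sequentially" by (simp add: eventually_ge_at_top)
  ultimately show ?thesis
    by eventually_elim (use B in \<open>auto simp: gd_def\<close>)
qed

definition GY :: "nat set \<Rightarrow> rf \<Rightarrow> nat \<Rightarrow> nat \<Rightarrow> nat" where
  "GY Y c s q = bev c (OY Y) s [q]"

definition Olv :: "(nat \<Rightarrow> nat \<Rightarrow> nat) \<Rightarrow> nat \<Rightarrow> nat \<Rightarrow> nat \<Rightarrow> nat" where
  "Olv G s T q = (if q mod 2 = 0 then G s (q div 2) else lookup T (q div 2) s)"

definition Tab :: "nat set \<Rightarrow> rf \<Rightarrow> rf \<Rightarrow> rf \<Rightarrow> nat \<Rightarrow> nat \<Rightarrow> nat" where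
  "Tab Y c0 cA cA' s n = rec_nat (tabsum s (\<lambda>x. cap s (bev c0 (OY Y) s [x])))
     (\<lambda>k T. tabsum s (\<lambda>x. cap s (bev cA (Olv (GY Y cA') s T) s [x]))) n"

definition Hs :: "nat set \<Rightarrow> rf \<Rightarrow> rf \<Rightarrow> rf \<Rightarrow> nat \<Rightarrow> nat \<Rightarrow> nat \<Rightarrow> nat" where
  "Hs Y c0 cA cA' s n x = lookup (Tab Y c0 cA cA' s n) x s"

lemma Olv_Tab: "Olv G s (Tab Y c0 cA cA' s n) = jn G (\<lambda>s. Hs Y c0 cA cA' s n) s"
  by (auto simp: Olv_def jn_def Hs_def)

lemma Hs_0: "Hs Y c0 cA cA' s 0 x = (if x < s then cap s (bev c0 (OY Y) s [x]) else 0)"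
  by (simp add: Hs_def Tab_def lookup_tabsum)

lemma Hs_Suc: "Hs Y c0 cA cA' s (Suc n) x =
   (if x < s then cap s (bev cA (jn (GY Y cA') (\<lambda>s. Hs Y c0 cA cA' s n) s) s [x]) else 0)"
proof -
  have "Hs Y c0 cA cA' s (Suc n) x = lookup (tabsum s (\<lambda>x. cap s (bev cA (Olv (GY Y cA') s (Tab Y c0 cA cA' s n)) s [x]))) x s"
    by (simp add: Hs_def Tab_def)
  then show ?thesis by (simp add: lookup_tabsum Olv_Tab)
qed

lemma cap_Suc: "cap s r = Suc v \<Longrightarrow> r = Suc v" by (auto simp: cap_def split: if_splits)
lemma cap_ok: "r = Suc v \<Longrightarrow> v \<le> s \<Longrightarrow> cap s r = Suc v" by (auto simp: cap_def)

lemma GY_sound: "\<forall>s q v. GY Y (from_nat e) s q = Suc v \<longrightarrow> g q = Some v"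
  if "\<forall>q. g q = Phi e (set_orc Y) q" using that phiY_sound by (auto simp: GY_def)

lemma GY_complete: "\<forall>q v. g q = Some v \<longrightarrow> eventually (\<lambda>s. GY Y (from_nat e) s q = Suc v) sequentially"
  if "\<forall>q. g q = Phi e (set_orc Y) q" using that phiY_complete by (auto simp: GY_def)

lemma levels:
  assumes A0: "\<forall>q. hn 0 q = Phi e0 (set_orc Y) q"
    and A1: "\<forall>q. gA q = Phi eA' (set_orc Y) q"
    and A2: "\<forall>n q. hn (Suc n) q = Phi eA (ojoin gA (hn n)) q"
  shows "(\<forall>s x v. Hs Y (from_nat e0) (from_nat eA) (from_nat eA') s n x = Suc v \<longrightarrow> hn n x = Some v) \<and>
         (\<forall>x v. hn n x = Some v \<longrightarrow> eventually (\<lambda>s. Hs Y (from_nat e0) (from_nat eA) (from_nat eA') s n x = Suc v) sequentially)"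
proof (induction n)
  case 0
  show ?case
  proof (intro conjI allI impI)
    fix s x v assume "Hs Y (from_nat e0) (from_nat eA) (from_nat eA') s 0 x = Suc v"
    then have "bev (from_nat e0) (OY Y) s [x] = Suc v" by (auto simp: Hs_0 split: if_splits dest: cap_Suc)
    then show "hn 0 x = Some v" using A0 phiY_sound by metis
  next
    fix x v assume "hn 0 x = Some v"
    then have "eventually (\<lambda>s. bev (from_nat e0) (OY Y) s [x] = Suc v) sequentially"
      using A0 phiY_complete by metis
    moreover have "eventually (\<lambda>s. s > x \<and> s \<ge> v) sequentially"
      by (simp add: eventually_conj_iff eventually_gt_at_top eventually_ge_at_top)
    ultimately show "eventually (\<lambda>s. Hs Y (from_nat e0) (from_nat eA) (from_nat eA') s 0 x = Suc v) sequentially"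
      by eventually_elim (simp add: Hs_0 cap_ok)
  qed
next
  case (Suc n)
  let ?H = "\<lambda>s. Hs Y (from_nat e0) (from_nat eA) (from_nat eA') s n"
  have Hsnd: "\<forall>s q v. ?H s q = Suc v \<longrightarrow> hn n q = Some v" using Suc by blast
  have Hcpl: "\<forall>q v. hn n q = Some v \<longrightarrow> eventually (\<lambda>s. ?H s q = Suc v) sequentially" using Suc by blast
  show ?case
  proof (intro conjI allI impI)
    fix s x v assume "Hs Y (from_nat e0) (from_nat eA) (from_nat eA') s (Suc n) x = Suc v"
    then have "bev (from_nat eA) (jn (GY Y (from_nat eA')) ?H s) s [x] = Suc v"
      by (auto simp: Hs_Suc split: if_splits dest: cap_Suc)
    then have "ev (ojoin gA (hn n)) (from_nat eA) [x] v"
      by (rule bev_sound[OF join_sound[OF GY_sound[OF A1] Hsnd]])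
    then show "hn (Suc n) x = Some v" using A2 Phi_eqI by metis
  next
    fix x v assume "hn (Suc n) x = Some v"
    then have "ev (ojoin gA (hn n)) (from_nat eA) [x] v" using A2 Phi_SomeD by metis
    then have "eventually (\<lambda>s. bev (from_nat eA) (jn (GY Y (from_nat eA')) ?H s) s [x] = Suc v) sequentially"
      by (rule join_complete[OF GY_complete[OF A1] Hcpl])
    moreover have "eventually (\<lambda>s. s > x \<and> s \<ge> v) sequentially"
      by (simp add: eventually_conj_iff eventually_gt_at_top eventually_ge_at_top)
    ultimately show "eventually (\<lambda>s. Hs Y (from_nat e0) (from_nat eA) (from_nat eA') s (Suc n) x = Suc v) sequentially"
      by eventually_elim (simp add: Hs_Suc cap_ok)
  qed
qed

definition Ulev :: "nat set \<Rightarrow> rf \<Rightarrow> rf \<Rightarrow> rf \<Rightarrow> rf \<Rightarrow> rf \<Rightarrow> nat \<Rightarrow> nat \<Rightarrow> nat \<Rightarrow> nat" where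
  "Ulev Y c0 cA cA' cC cC' k0 s n = bev cC (Olv (GY Y cC') s (Tab Y c0 cA cA' s n)) s [k0]"

lemma Ulev_props:
  assumes A0: "\<forall>q. hn 0 q = Phi e0 (set_orc Y) q"
    and A1: "\<forall>q. gA q = Phi eA' (set_orc Y) q"
    and A2: "\<forall>n q. hn (Suc n) q = Phi eA (ojoin gA (hn n)) q"
    and A3: "\<forall>q. gC q = Phi eC' (set_orc Y) q"
  shows "(Ulev Y (from_nat e0) (from_nat eA) (from_nat eA') (from_nat eC) (from_nat eC') k0 s n = Suc v
            \<longrightarrow> Phi eC (ojoin gC (hn n)) k0 = Some v) \<and>
         (Phi eC (ojoin gC (hn n)) k0 = Some v \<longrightarrow>
            (\<exists>s. Ulev Y (from_nat e0) (from_nat eA) (from_nat eA') (from_nat eC) (from_nat eC') k0 s n = Suc v))"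
proof -
  let ?H = "\<lambda>s. Hs Y (from_nat e0) (from_nat eA) (from_nat eA') s n"
  note L = levels[OF A0 A1 A2, of n]
  have Hsnd: "\<forall>s q v. ?H s q = Suc v \<longrightarrow> hn n q = Some v" using L by blast
  have Hcpl: "\<forall>q v. hn n q = Some v \<longrightarrow> eventually (\<lambda>s. ?H s q = Suc v) sequentially" using L by blast
  have U: "Ulev Y (from_nat e0) (from_nat eA) (from_nat eA') (from_nat eC) (from_nat eC') k0 s n =
      bev (from_nat eC) (jn (GY Y (from_nat eC')) ?H s) s [k0]" for s
    by (simp add: Ulev_def Olv_Tab)
  show ?thesis
  proof (intro conjI impI)
    assume "Ulev Y (from_nat e0) (from_nat eA) (from_nat eA') (from_nat eC) (from_nat eC') k0 s n = Suc v"
    then have "ev (ojoin gC (hn n)) (from_nat eC) [k0] v"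
      unfolding U by (rule bev_sound[OF join_sound[OF GY_sound[OF A3] Hsnd]])
    then show "Phi eC (ojoin gC (hn n)) k0 = Some v" by (rule Phi_eqI)
  next
    assume "Phi eC (ojoin gC (hn n)) k0 = Some v"
    then have "ev (ojoin gC (hn n)) (from_nat eC) [k0] v" by (rule Phi_SomeD)
    then have "eventually (\<lambda>s. bev (from_nat eC) (jn (GY Y (from_nat eC')) ?H s) s [k0] = Suc v) sequentially"
      by (rule join_complete[OF GY_complete[OF A3] Hcpl])
    then show "\<exists>s. Ulev Y (from_nat e0) (from_nat eA) (from_nat eA') (from_nat eC) (from_nat eC') k0 s n = Suc v"
      unfolding U eventually_sequentially by blast
  qed
qed

definition "oY = Comp Succ [Orc]"
lemma ev_oY: "ev (set_orc Y) oY (x # ps) (OY Y x)"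
  unfolding oY_def OY_def
  by (rule ev_CompI[OF la2_evC[OF _ la2_Nil] ev_Succ]) (rule ev_Orc, simp add: set_orc_def)

definition "cmpG c = cmp c oY 2 1"
lemma ev_cmpG: "ev (set_orc Y) (cmpG c) [q, s, T] (GY Y c s q)"
  using cmp_correct[of "[s, T]" 2 "set_orc Y" oY "OY Y" "[q]" 1 c] ev_oY
  by (simp add: cmpG_def GY_def)

lemma ev_DIV2: "ev Q DIV [z, Suc (Suc s) ^ q] (z div Suc (Suc s) ^ q)" by (rule ev_DIV) simp
lemma ev_MOD2: "ev Q MOD [z, Suc (Suc s)] (z mod Suc (Suc s))" by (rule ev_MOD) simp
lemma ev_DIV_2: "ev Q DIV [z, 2] (z div 2)" by (rule ev_DIV) simp
lemma ev_MOD_2: "ev Q MOD [z, 2] (z mod 2)" by (rule ev_MOD) simp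

definition "LOOKUP = Comp IFZ [Comp MONUS [Comp Succ [Proj 1], Proj 2],
   Comp MOD [Comp DIV [Proj 0, Comp POW [Comp Succ [Comp Succ [Proj 2]], Proj 1]], Comp Succ [Comp Succ [Proj 2]]],
   Zero]"
lemma ev_LOOKUP: "ev Q LOOKUP [T, q, s] (lookup T q s)"
proof -
  have "ev Q LOOKUP [T, q, s] (if Suc q - s = 0 then T div (Suc (Suc s)) ^ q mod (Suc (Suc s)) else 0)"
    unfolding LOOKUP_def by (rule evI ev_IFZ ev_MONUS ev_MOD2 ev_DIV2 ev_POW)+
  then show ?thesis by (simp add: lookup_def)
qed

definition "oLev cG = Comp IFZ [Comp MOD [Proj 0, cnst 2], Comp cG [Comp DIV [Proj 0, cnst 2], Proj 1, Proj 2],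
   Comp LOOKUP [Proj 2, Comp DIV [Proj 0, cnst 2], Proj 1]]"
lemma ev_oLev: "ev (set_orc Y) (oLev (cmpG c)) [q, s, T] (Olv (GY Y c) s T q)"
proof -
  have "ev (set_orc Y) (oLev (cmpG c)) [q, s, T]
     (if q mod 2 = 0 then GY Y c s (q div 2) else lookup T (q div 2) s)"
    unfolding oLev_def by (rule evI ev_IFZ ev_MOD_2 ev_DIV_2 ev_cnst ev_cmpG ev_LOOKUP)+
  then show ?thesis by (simp add: Olv_def)
qed

definition "cmpL c cG = cmp c (oLev (cmpG cG)) 2 1"
lemma ev_cmpL: "ev (set_orc Y) (cmpL c cG) [x, s, T] (bev c (Olv (GY Y cG) s T) s [x])"
proof -
  have "\<And>q. ev (set_orc Y) (oLev (cmpG cG)) (q # [s, T]) (Olv (GY Y cG) s T q)" by (rule ev_oLev)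
  from cmp_correct[of "[s, T]" 2 "set_orc Y" "oLev (cmpG cG)" "Olv (GY Y cG) s T" "[x]" 1 c, OF _ _ this]
  show ?thesis by (simp add: cmpL_def)
qed

definition "CAP = Comp IFZ [Comp MONUS [Proj 0, Comp Succ [Proj 1]], Proj 0, Zero]"
lemma ev_CAP: "ev Q CAP [r, s] (cap s r)"
  unfolding CAP_def cap_def by (rule evI ev_IFZ ev_MONUS)+

definition "DSUM d = Comp (Prec Zero (Comp ADD [Proj 1, Comp MULT [Comp d [Proj 0, Proj 2, Proj 3],
    Comp POW [Comp Succ [Comp Succ [Proj 2]], Proj 0]]])) [Proj 0, Proj 0, Proj 1]"
lemma ev_DSUM:
  assumes "\<And>t. ev Q d [t, s, T] (D t)"
  shows "ev Q (DSUM d) [s, T] (tabsum s D)"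
proof -
  have "ev Q (DSUM d) [s, T] (rec_nat 0 (\<lambda>t acc. acc + D t * (Suc (Suc s)) ^ t) s)"
    unfolding DSUM_def by (rule evI ev_Prec_rec ev_ADD ev_MULT ev_POW assms)+
  then show ?thesis by (simp add: tabsum_def tsum_def)
qed

definition "TAB c0 cA cA' = Prec (Comp (DSUM (Comp CAP [cmpG c0, Proj 1])) [Proj 0, Zero])
   (Comp (DSUM (Comp CAP [cmpL cA cA', Proj 1])) [Proj 2, Proj 1])"
lemma ev_TAB: "ev (set_orc Y) (TAB c0 cA cA') [n, s] (Tab Y c0 cA cA' s n)"
proof -
  have D0: "ev (set_orc Y) (DSUM (Comp CAP [cmpG c0, Proj 1])) [s, T] (tabsum s (\<lambda>x. cap s (bev c0 (OY Y) s [x])))" for T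
  proof (rule ev_DSUM)
    fix t show "ev (set_orc Y) (Comp CAP [cmpG c0, Proj 1]) [t, s, T] (cap s (bev c0 (OY Y) s [t]))"
    proof -
      have "ev (set_orc Y) (cmpG c0) [t, s, T] (bev c0 (OY Y) s [t])" using ev_cmpG[of Y c0 t s T] by (simp add: GY_def)
      then show ?thesis by (rule ev_CompI[OF la2_evC[OF _ la2_evC[OF ev_P1 la2_Nil]] ev_CAP])
    qed
  qed
  have DA: "ev (set_orc Y) (DSUM (Comp CAP [cmpL cA cA', Proj 1])) [s, T]
       (tabsum s (\<lambda>x. cap s (bev cA (Olv (GY Y cA') s T) s [x])))" for T
    by (rule ev_DSUM) (rule evI ev_CAP ev_cmpL)+
  have "ev (set_orc Y) (TAB c0 cA cA') [n, s] (rec_nat (tabsum s (\<lambda>x. cap s (bev c0 (OY Y) s [x])))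
     (\<lambda>k T. tabsum s (\<lambda>x. cap s (bev cA (Olv (GY Y cA') s T) s [x]))) n)"
    unfolding TAB_def by (rule evI ev_Prec_rec D0 DA)+
  then show ?thesis by (simp add: Tab_def)
qed

definition "UPR c0 cA cA' cC cC' k0 = Comp (cmpL cC cC') [cnst k0, Proj 0, Comp (TAB c0 cA cA') [Proj 1, Proj 0]]"
lemma ev_UPR: "ev (set_orc Y) (UPR c0 cA cA' cC cC' k0) [s, n] (Ulev Y c0 cA cA' cC cC' k0 s n)"
  unfolding UPR_def Ulev_def by (rule evI ev_cnst ev_TAB ev_cmpL)+

definition "CHK U W = Comp IFZ [Comp ADD [U, W], cnst 1, Zero]"
definition "DEC U W tt = Comp IFZ [U, Comp MONUS [cnst 1, Comp EQ [W, cnst tt]], Comp EQ [U, cnst tt]]"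
definition "FINAL U W tt = Comp (DEC U W tt) [Mu (CHK U W), Proj 0]"

lemma ev_FINAL:
  assumes U: "\<And>s. ev Q U [s, n] (Uf s)" and W: "\<And>s. ev Q W [s, n] (Wf s)"
    and ex: "\<exists>s. Uf s + Wf s \<noteq> 0"
  shows "\<exists>s0. ev Q (FINAL U W tt) [n]
     (if Uf s0 = 0 then 1 - (if Wf s0 = tt then 1 else 0) else (if Uf s0 = tt then 1 else 0)) \<and>
     Uf s0 + Wf s0 \<noteq> 0"
proof -
  define s0 where "s0 = (LEAST s. Uf s + Wf s \<noteq> 0)"
  have s0: "Uf s0 + Wf s0 \<noteq> 0" using ex unfolding s0_def by (rule LeastI_ex)
  have below: "\<forall>m<s0. Uf m + Wf m = 0"
  proof (intro allI impI)
    fix m assume "m < s0"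
    then have "\<not> (Uf m + Wf m \<noteq> 0)" unfolding s0_def by (rule not_less_Least)
    then show "Uf m + Wf m = 0" by simp
  qed
  have chk: "ev Q (CHK U W) [s, n] (if Uf s + Wf s = 0 then 1 else 0)" for s
    unfolding CHK_def by (rule evI ev_IFZ ev_ADD U W ev_cnst)+
  have mu: "ev Q (Mu (CHK U W)) [n] s0"
  proof (rule ev_Mu)
    show "ev Q (CHK U W) [s0, n] 0" using chk[of s0] by (rule ev_eq) (use s0 in simp)
    show "\<forall>m<s0. \<exists>y>0. ev Q (CHK U W) [m, n] y"
    proof (intro allI impI)
      fix m assume "m < s0"
      then have "Uf m + Wf m = 0" using below by blast
      then have "ev Q (CHK U W) [m, n] 1" using chk[of m] by simp
      then show "\<exists>y>0. ev Q (CHK U W) [m, n] y" by blast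
    qed
  qed
  have "ev Q (FINAL U W tt) [n]
     (if Uf s0 = 0 then 1 - (if Wf s0 = tt then 1 else 0) else (if Uf s0 = tt then 1 else 0))"
    unfolding FINAL_def DEC_def by (rule evI mu ev_IFZ ev_MONUS ev_EQ ev_cnst U W)+
  then show ?thesis using s0 by blast
qed

lemma main_Y:
  assumes A0: "\<forall>q. hn 0 q = Phi e0 (set_orc Y) q"
    and A1: "\<forall>q. gA q = Phi eA' (set_orc Y) q"
    and A2: "\<forall>n q. hn (Suc n) q = Phi eA (ojoin gA (hn n)) q"
    and A3: "\<forall>q. gC q = Phi eC' (set_orc Y) q"
    and A4: "\<forall>n k. Phi eC (ojoin gC (hn n)) k = (if n \<in> X then fT k else fF k)"
    and A5: "\<forall>q. gD q = Phi eD' (set_orc Y) q"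
    and A6: "\<forall>n k. Phi eD (ojoin gD (hn n)) k = (if n \<in> X then fF k else fT k)"
    and A7: "fT k0 \<noteq> fF k0"
  shows "X \<le>\<^sub>T Y"
proof -
  let ?c0 = "from_nat e0 :: rf" and ?cA = "from_nat eA :: rf" and ?cA' = "from_nat eA' :: rf"
  let ?U = "UPR ?c0 ?cA ?cA' (from_nat eC) (from_nat eC') k0"
  let ?W = "UPR ?c0 ?cA ?cA' (from_nat eD) (from_nat eD') k0"
  let ?Uf = "\<lambda>n s. Ulev Y ?c0 ?cA ?cA' (from_nat eC) (from_nat eC') k0 s n"
  let ?Wf = "\<lambda>n s. Ulev Y ?c0 ?cA ?cA' (from_nat eD) (from_nat eD') k0 s n"
  define tt where "tt = (case fT k0 of None \<Rightarrow> 0 | Some t \<Rightarrow> Suc t)"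
  have tt: "tt = Suc v \<longleftrightarrow> fT k0 = Some v" for v by (cases "fT k0") (auto simp: tt_def)
  have "\<forall>n. Phi (to_nat (FINAL ?U ?W tt)) (set_orc Y) n = Some (if n \<in> X then 1 else 0)"
  proof
    fix n
    have UP: "(?Uf n s = Suc v \<longrightarrow> Phi eC (ojoin gC (hn n)) k0 = Some v) \<and>
        (Phi eC (ojoin gC (hn n)) k0 = Some v \<longrightarrow> (\<exists>s. ?Uf n s = Suc v))" for s v
      by (rule Ulev_props[OF A0 A1 A2 A3])
    have WP: "(?Wf n s = Suc v \<longrightarrow> Phi eD (ojoin gD (hn n)) k0 = Some v) \<and>
        (Phi eD (ojoin gD (hn n)) k0 = Some v \<longrightarrow> (\<exists>s. ?Wf n s = Suc v))" for s v
      by (rule Ulev_props[OF A0 A1 A2 A5])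
    have ex: "\<exists>s. ?Uf n s + ?Wf n s \<noteq> 0"
    proof (cases "fT k0")
      case None
      then obtain v where v: "fF k0 = Some v" using A7 by (cases "fF k0") auto
      show ?thesis
      proof (cases "n \<in> X")
        case True
        then have "Phi eD (ojoin gD (hn n)) k0 = Some v" using A6 v by simp
        then obtain s where "?Wf n s = Suc v" using WP by blast
        then have "?Uf n s + ?Wf n s \<noteq> 0" by simp
        then show ?thesis by blast
      next
        case False
        then have "Phi eC (ojoin gC (hn n)) k0 = Some v" using A4 v by simp
        then obtain s where "?Uf n s = Suc v" using UP by blast
        then have "?Uf n s + ?Wf n s \<noteq> 0" by simp
        then show ?thesis by blast
      qed
    next
      case (Some v)
      show ?thesis
      proof (cases "n \<in> X")
        case True
        then have "Phi eC (ojoin gC (hn n)) k0 = Some v" using A4 Some by simp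
        then obtain s where "?Uf n s = Suc v" using UP by blast
        then have "?Uf n s + ?Wf n s \<noteq> 0" by simp
        then show ?thesis by blast
      next
        case False
        then have "Phi eD (ojoin gD (hn n)) k0 = Some v" using A6 Some by simp
        then obtain s where "?Wf n s = Suc v" using WP by blast
        then have "?Uf n s + ?Wf n s \<noteq> 0" by simp
        then show ?thesis by blast
      qed
    qed
    have Uev: "\<And>s. ev (set_orc Y) ?U [s, n] (?Uf n s)" by (rule ev_UPR)
    have Wev: "\<And>s. ev (set_orc Y) ?W [s, n] (?Wf n s)" by (rule ev_UPR)
    obtain s0 where s0: "ev (set_orc Y) (FINAL ?U ?W tt) [n]
       (if ?Uf n s0 = 0 then 1 - (if ?Wf n s0 = tt then 1 else 0) else (if ?Uf n s0 = tt then 1 else 0))"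
       and nz: "?Uf n s0 + ?Wf n s0 \<noteq> 0"
      using ev_FINAL[OF Uev Wev ex, of tt] by blast
    have val: "(if ?Uf n s0 = 0 then 1 - (if ?Wf n s0 = tt then 1 else 0) else (if ?Uf n s0 = tt then 1 else 0))
        = (if n \<in> X then 1 else (0::nat))"
    proof (cases "?Uf n s0 = 0")
      case False
      then obtain v where v: "?Uf n s0 = Suc v" by (cases "?Uf n s0") auto
      then have ph: "Phi eC (ojoin gC (hn n)) k0 = Some v" using UP by blast
      show ?thesis
      proof (cases "n \<in> X")
        case True
        then have "fT k0 = Some v" using ph A4 by simp
        then have "tt = Suc v" using tt[of v] by simp
        then show ?thesis using v True by simp
      next
        case False
        then have "fF k0 = Some v" using ph A4 by simp
        then have "fT k0 \<noteq> Some v" using A7 by auto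
        then have "tt \<noteq> Suc v" using tt[of v] by simp
        then show ?thesis using v False by simp
      qed
    next
      case True
      then obtain v where v: "?Wf n s0 = Suc v" using nz by (cases "?Wf n s0") auto
      then have ph: "Phi eD (ojoin gD (hn n)) k0 = Some v" using WP by blast
      show ?thesis
      proof (cases "n \<in> X")
        case True
        then have "fF k0 = Some v" using ph A6 by simp
        then have "fT k0 \<noteq> Some v" using A7 by auto
        then have "tt \<noteq> Suc v" using tt[of v] by simp
        then show ?thesis using v True \<open>?Uf n s0 = 0\<close> by simp
      next
        case False
        then have "fT k0 = Some v" using ph A6 by simp
        then have "tt = Suc v" using tt[of v] by simp
        then show ?thesis using v False \<open>?Uf n s0 = 0\<close> by simp
      qed
    qed
    show "Phi (to_nat (FINAL ?U ?W tt)) (set_orc Y) n = Some (if n \<in> X then 1 else 0)"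
      using s0 val by (intro Phi_eqI) simp
  qed
  then show ?thesis unfolding turing_le_def by blast
qed

primrec sub :: "rf \<Rightarrow> rf \<Rightarrow> rf" where
  "sub r Zero = Zero"
| "sub r Succ = Succ"
| "sub r (Proj i) = Proj i"
| "sub r (Comp f gs) = Comp (sub r f) (map (sub r) gs)"
| "sub r (Prec f g) = Prec (sub r f) (sub r g)"
| "sub r (Mu f) = Mu (sub r f)"
| "sub r Orc = Comp r [Proj 0]"

lemma sub_fwd:
  assumes r: "\<And>x. ev QY r [x] (if x \<in> X then 1 else 0)"
  shows "ev (set_orc X) c xs y \<Longrightarrow> ev QY (sub r c) xs y"
proof (induction rule: ev.induct)
  case (ev_Zero xs) then show ?case by (simp add: ev.ev_Zero)
next
  case (ev_Succ x xs) then show ?case by (simp add: ev.ev_Succ)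
next
  case (ev_Proj i xs) then show ?case by (simp add: ev.ev_Proj)
next
  case (ev_Orc x y xs)
  then have y: "y = (if x \<in> X then 1 else 0)" by (simp add: set_orc_def)
  show ?case unfolding sub.simps y by (rule ev_CompI[OF la2_evC[OF ev_P0 la2_Nil] r])
next
  case (ev_Comp ys gs xs f z)
  show ?case unfolding sub.simps
    by (rule ev.ev_Comp) (use ev_Comp in auto)
next
  case (ev_Prec0 f xs y g) then show ?case by (simp add: ev.ev_Prec0)
next
  case (ev_PrecS f g n xs y z) then show ?case by (simp add: ev.ev_PrecS)
next
  case (ev_Mu f n xs) then show ?case by (auto intro!: ev.ev_Mu)
qed

lemma sub_bwd:
  assumes r: "\<And>x. ev QY r [x] (if x \<in> X then 1 else 0)"
  shows "ev QY d xs y \<Longrightarrow> \<forall>c. d = sub r c \<longrightarrow> ev (set_orc X) c xs y"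
proof (induction rule: ev.induct)
  case (ev_Zero xs) show ?case
  proof (intro allI impI)
    fix c assume "Zero = sub r c" then show "ev (set_orc X) c xs 0" by (cases c) (auto intro: ev.ev_Zero)
  qed
next
  case (ev_Succ x xs) show ?case
  proof (intro allI impI)
    fix c assume "Succ = sub r c" then show "ev (set_orc X) c (x # xs) (Suc x)" by (cases c) (auto intro: ev.ev_Succ)
  qed
next
  case (ev_Proj i xs) show ?case
  proof (intro allI impI)
    fix c assume "Proj i = sub r c" then show "ev (set_orc X) c xs (xs ! i)" using ev_Proj by (cases c) (auto intro: ev.ev_Proj)
  qed
next
  case (ev_Orc x y xs) show ?case
  proof (intro allI impI)
    fix c assume "Orc = sub r c" then show "ev (set_orc X) c (x # xs) y" by (cases c) auto
  qed
next
  case (ev_Comp ys gs xs f z)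
  show ?case
  proof (intro allI impI)
    fix c assume c: "Comp f gs = sub r c"
    show "ev (set_orc X) c xs z"
    proof (cases c)
      case Orc
      then have fr: "f = r" "gs = [Proj 0]" using c by auto
      then obtain v where ys: "ys = [v]" using ev_Comp.hyps(1) by (cases ys) auto
      have "ev QY (gs ! 0) xs (ys ! 0)" using ev_Comp.IH(1) fr by auto
      then have "ev QY (Proj 0) xs v" using fr ys by simp
      then obtain x xs' where xs: "xs = x # xs'" "v = x"
        by (cases rule: ev.cases) (cases xs, auto)
      have "ev QY r [x] z" using ev_Comp.hyps(2) fr ys xs by simp
      then have "z = (if x \<in> X then 1 else 0)" using r ev_det by blast
      then show ?thesis using Orc xs by (auto intro!: ev.ev_Orc simp: set_orc_def)
    next
      case (Comp f0 gs0)
      then have f: "f = sub r f0" "gs = map (sub r) gs0" using c by auto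
      show ?thesis unfolding Comp
      proof (rule ev.ev_Comp)
        show "length ys = length gs0" using ev_Comp.hyps(1) f by simp
        show "\<forall>i<length gs0. ev (set_orc X) (gs0 ! i) xs (ys ! i)" using ev_Comp.IH(1) f by auto
        show "ev (set_orc X) f0 ys z" using ev_Comp.IH(2) f by auto
      qed
    qed (use c in auto)
  qed
next
  case (ev_Prec0 f xs y g)
  show ?case
  proof (intro allI impI)
    fix c assume c: "Prec f g = sub r c"
    then show "ev (set_orc X) c (0 # xs) y" using ev_Prec0.IH by (cases c) (auto intro: ev.ev_Prec0)
  qed
next
  case (ev_PrecS f g n xs y z)
  show ?case
  proof (intro allI impI)
    fix c assume c: "Prec f g = sub r c"
    then obtain f0 g0 where fg: "c = Prec f0 g0" "f = sub r f0" "g = sub r g0" by (cases c) auto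
    have "ev (set_orc X) (Prec f0 g0) (n # xs) y" using ev_PrecS.IH(1) fg by simp
    moreover have "ev (set_orc X) g0 (n # y # xs) z" using ev_PrecS.IH(2) fg by simp
    ultimately show "ev (set_orc X) c (Suc n # xs) z" unfolding fg(1) by (rule ev.ev_PrecS)
  qed
next
  case (ev_Mu f n xs)
  show ?case
  proof (intro allI impI)
    fix c assume c: "Mu f = sub r c"
    then obtain f0 where f0: "c = Mu f0" "f = sub r f0" by (cases c) auto
    show "ev (set_orc X) c xs n" unfolding f0(1)
    proof (rule ev.ev_Mu)
      show "ev (set_orc X) f0 (n # xs) 0" using ev_Mu.IH(1) f0 by blast
      show "\<forall>m<n. \<exists>y>0. ev (set_orc X) f0 (m # xs) y" using ev_Mu.IH(2) f0 by blast
    qed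
  qed
qed

lemma Zcomp_mono:
  assumes XY: "X \<le>\<^sub>T Y" and phi: "Z_computable X \<phi>"
  shows "Z_computable Y \<phi>"
proof -
  obtain e where e: "\<forall>n. Phi e (set_orc Y) n = Some (if n \<in> X then 1 else 0)"
    using XY unfolding turing_le_def by blast
  let ?r = "from_nat e :: rf"
  have r: "\<And>x. ev (set_orc Y) ?r [x] (if x \<in> X then 1 else 0)" using e Phi_SomeD by blast
  obtain e' where e': "\<forall>n. \<phi> n = Phi e' (set_orc X) n" using phi unfolding Z_computable_def by blast
  let ?c = "from_nat e' :: rf"
  have "\<forall>n. \<phi> n = Phi (to_nat (sub ?r ?c)) (set_orc Y) n"
  proof
    fix n
    show "\<phi> n = Phi (to_nat (sub ?r ?c)) (set_orc Y) n"
    proof (cases "\<exists>y. ev (set_orc X) ?c [n] y")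
      case True
      then obtain y where y: "ev (set_orc X) ?c [n] y" by blast
      then have "\<phi> n = Some y" using e' Phi_eqI by metis
      moreover have "Phi (to_nat (sub ?r ?c)) (set_orc Y) n = Some y"
        by (rule Phi_eqI) (simp add: sub_fwd[OF r y])
      ultimately show ?thesis by simp
    next
      case False
      then have "\<phi> n = None" using e' Phi_None by metis
      moreover have "Phi (to_nat (sub ?r ?c)) (set_orc Y) n = None"
      proof (rule Phi_None)
        fix y
        show "\<not> ev (set_orc Y) (from_nat (to_nat (sub ?r ?c))) [n] y"
        proof
          assume "ev (set_orc Y) (from_nat (to_nat (sub ?r ?c))) [n] y"
          then have "ev (set_orc Y) (sub ?r ?c) [n] y" by simp
          then have "ev (set_orc X) ?c [n] y" using sub_bwd[OF r] by blast
          then show False using False by blast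
        qed
      qed
      ultimately show ?thesis by simp
    qed
  qed
  then show ?thesis unfolding Z_computable_def by blast
qed

definition K :: "nat \<Rightarrow> nat \<Rightarrow> nat option" where "K c = (\<lambda>k. Some c)"

lemma K_inj: "K a = K b \<longleftrightarrow> a = b" by (auto simp: K_def dest: fun_cong)

lemma K_carrier: "K c \<in> B_carrier Z"
proof -
  have "\<forall>n. K c n = Phi (to_nat (cnst c)) (set_orc Z) n"
    by (auto simp: K_def intro!: Phi_eqI[symmetric] ev_cnst)
  then show ?thesis by (auto simp: B_carrier_def Z_computable_def)
qed

definition "pA = Comp Succ [Comp Orc [cnst 1]]"
definition "Ael = K (to_nat pA)"

lemma app_A: "B_app Ael (K n) = Some (K (Suc n))"
proof -
  have "ev (ojoin Ael (K n)) pA [k] (Suc n)" for k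
  proof -
    have "ev (ojoin Ael (K n)) (Comp Orc [cnst 1]) [k] n"
      by (rule ev_CompI[OF la2_evC[OF ev_cnst la2_Nil]], rule ev_Orc) (simp add: ojoin_def K_def)
    then show ?thesis unfolding pA_def by (rule ev_CompI[OF la2_evC[OF _ la2_Nil] ev_Succ])
  qed
  then show ?thesis by (auto simp: B_app_def Ael_def K_def intro!: ext Phi_eqI)
qed

definition "pC = Comp Orc [Comp ADD [Comp Succ [Comp Orc [cnst 1]], Comp Succ [Comp Orc [cnst 1]]]]"
definition "chi1 X = (\<lambda>k. if k = 0 then Some (to_nat pC) else Some (if k - 1 \<in> X then 1 else 0))"
definition "chi2 X = (\<lambda>k. if k = 0 then Some (to_nat pC) else Some (if k - 1 \<in> X then 0 else 1))"

lemma pC_run: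
  assumes "\<psi> (Suc n) = Some v"
  shows "ev (ojoin \<psi> (K n)) pC [k] v"
proof -
  have o: "ev (ojoin \<psi> (K n)) (Comp Orc [cnst 1]) [k] n"
    by (rule ev_CompI[OF la2_evC[OF ev_cnst la2_Nil]], rule ev_Orc) (simp add: ojoin_def K_def)
  have s: "ev (ojoin \<psi> (K n)) (Comp Succ [Comp Orc [cnst 1]]) [k] (Suc n)"
    by (rule ev_CompI[OF la2_evC[OF o la2_Nil] ev_Succ])
  have a: "ev (ojoin \<psi> (K n)) (Comp ADD [Comp Succ [Comp Orc [cnst 1]], Comp Succ [Comp Orc [cnst 1]]]) [k] (Suc n + Suc n)"
    by (rule ev_CompI[OF la2_evC[OF s la2_evC[OF s la2_Nil]] ev_ADD])
  show ?thesis unfolding pC_def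
    by (rule ev_CompI[OF la2_evC[OF a la2_Nil]], rule ev_Orc) (use assms in \<open>simp add: ojoin_def\<close>)
qed

lemma app_chi1: "B_app (chi1 X) (K n) = Some (K (if n \<in> X then 1 else 0))"
proof -
  have "ev (ojoin (chi1 X) (K n)) pC [k] (if n \<in> X then 1 else 0)" for k
    by (rule pC_run) (simp add: chi1_def)
  then show ?thesis by (auto simp: B_app_def chi1_def K_def intro!: ext Phi_eqI)
qed

lemma app_chi2: "B_app (chi2 X) (K n) = Some (K (if n \<in> X then 0 else 1))"
proof -
  have "ev (ojoin (chi2 X) (K n)) pC [k] (if n \<in> X then 0 else 1)" for k
    by (rule pC_run) (simp add: chi2_def)
  then show ?thesis by (auto simp: B_app_def chi2_def K_def intro!: ext Phi_eqI)
qed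

lemma chi1_carrier: "chi1 X \<in> B_carrier X"
proof -
  let ?p = "Prec (cnst (to_nat pC)) (Comp Orc [Proj 0])"
  have "ev (set_orc X) ?p [k] (rec_nat (to_nat pC) (\<lambda>j r. if j \<in> X then 1 else 0) k)" for k
  proof (rule ev_Prec_rec[OF ev_cnst])
    fix j r show "ev (set_orc X) (Comp Orc [Proj 0]) [j, r] (if j \<in> X then 1 else 0)"
      by (rule ev_CompI[OF la2_evC[OF ev_P0 la2_Nil]], rule ev_Orc) (simp add: set_orc_def)
  qed
  note E = this
  have "\<forall>k. chi1 X k = Phi (to_nat ?p) (set_orc X) k"
  proof
    fix k
    have "Phi (to_nat ?p) (set_orc X) k = Some (rec_nat (to_nat pC) (\<lambda>j r. if j \<in> X then 1 else 0) k)"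
      by (rule Phi_eqI) (simp only: from_nat_to_nat E)
    then show "chi1 X k = Phi (to_nat ?p) (set_orc X) k" by (cases k) (simp_all add: chi1_def)
  qed
  then show ?thesis by (auto simp: B_carrier_def Z_computable_def)
qed

lemma chi2_carrier: "chi2 X \<in> B_carrier X"
proof -
  let ?p = "Prec (cnst (to_nat pC)) (Comp MONUS [cnst 1, Comp Orc [Proj 0]])"
  have "ev (set_orc X) ?p [k] (rec_nat (to_nat pC) (\<lambda>j r. 1 - (if j \<in> X then 1 else 0)) k)" for k
  proof (rule ev_Prec_rec[OF ev_cnst])
    fix j r
    have "ev (set_orc X) (Comp Orc [Proj 0]) [j, r] (if j \<in> X then 1 else 0)"
      by (rule ev_CompI[OF la2_evC[OF ev_P0 la2_Nil]], rule ev_Orc) (simp add: set_orc_def)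
    then show "ev (set_orc X) (Comp MONUS [cnst 1, Comp Orc [Proj 0]]) [j, r] (1 - (if j \<in> X then 1 else 0))"
      by (rule ev_CompI[OF la2_evC[OF ev_cnst la2_evC[OF _ la2_Nil]] ev_MONUS])
  qed
  note E = this
  have "\<forall>k. chi2 X k = Phi (to_nat ?p) (set_orc X) k"
  proof
    fix k
    have "Phi (to_nat ?p) (set_orc X) k = Some (rec_nat (to_nat pC) (\<lambda>j r. 1 - (if j \<in> X then 1 else 0)) k)"
      by (rule Phi_eqI) (simp only: from_nat_to_nat E)
    then show "chi2 X k = Phi (to_nat ?p) (set_orc X) k" by (cases k) (simp_all add: chi2_def)
  qed
  then show ?thesis by (auto simp: B_carrier_def Z_computable_def)
qed

lemma B_app_val: "B_app \<phi> \<psi> = Some c \<Longrightarrow> c = (\<lambda>n. case \<phi> 0 of None \<Rightarrow> None | Some e \<Rightarrow> Phi e (ojoin \<phi> \<psi>) n)"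
  by (simp add: B_app_def)

lemma const_turing: "(\<forall>n. Phi e (set_orc Y) n = Some (if n \<in> X then 1 else 0)) \<Longrightarrow> X \<le>\<^sub>T Y"
  unfolding turing_le_def by blast

theorem theorem6p12:
  fixes X Y :: "nat set"
  shows "(\<exists>f. pca_embedding (B_carrier X) B_app (B_carrier Y) B_app f) \<longleftrightarrow> X \<le>\<^sub>T Y"
proof
  assume "\<exists>f. pca_embedding (B_carrier X) B_app (B_carrier Y) B_app f"
  then obtain f where img: "f ` B_carrier X \<subseteq> B_carrier Y" and inj: "inj_on f (B_carrier X)"
    and hom: "\<forall>a\<in>B_carrier X. \<forall>b\<in>B_carrier X. \<forall>c. B_app a b = Some c \<longrightarrow> B_app (f a) (f b) = Some (f c)"
    unfolding pca_embedding_def by blast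
  have fK: "f (K a) = f (K b) \<Longrightarrow> a = b" for a b
    using inj K_carrier K_inj unfolding inj_on_def by metis
  have Ycomp: "a \<in> B_carrier X \<Longrightarrow> \<exists>e. \<forall>q. f a q = Phi e (set_orc Y) q" for a
    using img unfolding B_carrier_def Z_computable_def by blast
  have happ: "a \<in> B_carrier X \<Longrightarrow> B_app a (K n) = Some c \<Longrightarrow>
      f c = (\<lambda>k. case f a 0 of None \<Rightarrow> None | Some e \<Rightarrow> Phi e (ojoin (f a) (f (K n))) k)" for a n c
    using hom K_carrier B_app_val by blast
  have Acar: "Ael \<in> B_carrier X" by (simp add: Ael_def K_carrier)
  let ?gA = "f Ael"
  have hA: "f (K (Suc n)) = (\<lambda>k. case ?gA 0 of None \<Rightarrow> None | Some e \<Rightarrow> Phi e (ojoin ?gA (f (K n))) k)" for n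
    using happ[OF Acar app_A] .
  obtain eA where eA: "?gA 0 = Some eA"
  proof (cases "?gA 0")
    case None
    then have "f (K (Suc 0)) = f (K (Suc (Suc 0)))" using hA[of 0] hA[of "Suc 0"] by simp
    then have False using fK by fastforce
    then show ?thesis ..
  qed
  obtain e0 where A0: "\<forall>q. f (K 0) q = Phi e0 (set_orc Y) q" using Ycomp K_carrier by blast
  obtain eA' where A1: "\<forall>q. ?gA q = Phi eA' (set_orc Y) q" using Ycomp Acar by blast
  have A2: "\<forall>n q. f (K (Suc n)) q = Phi eA (ojoin ?gA (f (K n))) q" using hA eA by simp
  show "X \<le>\<^sub>T Y"
  proof (cases "X = {} \<or> X = UNIV")
    case True
    then show ?thesis
    proof
      assume "X = {}"
      then show ?thesis by (intro const_turing[of "to_nat (cnst 0)"]) (auto intro!: Phi_eqI ev_cnst)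
    next
      assume "X = UNIV"
      then show ?thesis by (intro const_turing[of "to_nat (cnst 1)"]) (auto intro!: Phi_eqI ev_cnst)
    qed
  next
    case False
    then obtain a b where ab: "a \<in> X" "b \<notin> X" by blast
    let ?gC = "f (chi1 X)" and ?gD = "f (chi2 X)"
    have hC: "f (K (if n \<in> X then 1 else 0)) = (\<lambda>k. case ?gC 0 of None \<Rightarrow> None | Some e \<Rightarrow> Phi e (ojoin ?gC (f (K n))) k)" for n
      using happ[OF chi1_carrier app_chi1] .
    have hD: "f (K (if n \<in> X then 0 else 1)) = (\<lambda>k. case ?gD 0 of None \<Rightarrow> None | Some e \<Rightarrow> Phi e (ojoin ?gD (f (K n))) k)" for n
      using happ[OF chi2_carrier app_chi2] .
    obtain eC where eC: "?gC 0 = Some eC"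
    proof (cases "?gC 0")
      case None
      then have "f (K 1) = f (K 0)" using hC[of a] hC[of b] ab by simp
      then have False using fK by fastforce
    then show ?thesis ..
    qed
    obtain eD where eD: "?gD 0 = Some eD"
    proof (cases "?gD 0")
      case None
      then have "f (K 0) = f (K 1)" using hD[of a] hD[of b] ab by simp
      then have False using fK by fastforce
    then show ?thesis ..
    qed
    obtain eC' where A3: "\<forall>q. ?gC q = Phi eC' (set_orc Y) q" using Ycomp chi1_carrier by blast
    obtain eD' where A5: "\<forall>q. ?gD q = Phi eD' (set_orc Y) q" using Ycomp chi2_carrier by blast
    have A4: "\<forall>n k. Phi eC (ojoin ?gC (f (K n))) k = (if n \<in> X then f (K 1) k else f (K 0) k)"
    proof (intro allI)
      fix n k show "Phi eC (ojoin ?gC (f (K n))) k = (if n \<in> X then f (K 1) k else f (K 0) k)"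
        using fun_cong[OF hC[of n], of k] eC by (cases "n \<in> X") auto
    qed
    have A6: "\<forall>n k. Phi eD (ojoin ?gD (f (K n))) k = (if n \<in> X then f (K 0) k else f (K 1) k)"
    proof (intro allI)
      fix n k show "Phi eD (ojoin ?gD (f (K n))) k = (if n \<in> X then f (K 0) k else f (K 1) k)"
        using fun_cong[OF hD[of n], of k] eD by (cases "n \<in> X") auto
    qed
    have "f (K 1) \<noteq> f (K 0)" using fK by fastforce
    then obtain k0 where A7: "f (K 1) k0 \<noteq> f (K 0) k0" by blast
    show ?thesis by (rule main_Y[OF A0 A1 A2 A3 A4 A5 A6 A7])
  qed
next
  assume XY: "X \<le>\<^sub>T Y"
  have "pca_embedding (B_carrier X) B_app (B_carrier Y) B_app id"
    unfolding pca_embedding_def using Zcomp_mono[OF XY] by (auto simp: B_carrier_def)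
  then show "\<exists>f. pca_embedding (B_carrier X) B_app (B_carrier Y) B_app f" by blast
qed


end
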